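(* Let $G$ be a connected weighted multigraph on the vertex set $V$, $|V|=n\ge2$, with positive edge weights and Laplacian matrix $L$, and let $\tilde G$ be any balance-graph of $G$. For $\alpha>0$ let $Q_\alpha=(I+\alpha L)^{-1}=(q_{ij}(\alpha))$ and let $$d^F_\alpha(i,j)=\theta\Bigl(\tfrac12\bigl(\ln q_{ii}(\alpha)+\ln q_{jj}(\alpha)\bigr)-\ln q_{ij}(\alpha)\Bigr),\qquad\theta=\ln\bigl(e+\alpha^{2/n}\bigr)\frac{\alpha-1}{\ln\alpha}$$ ($\theta=\ln(e+1)$ at $\alpha=1$) be the logarithmic forest distance with edge weight transformation $w\mapsto\alpha w$. Then for every $\alpha>0$ and all $i,j\in V$, $d^F_\alpha(i,j)=\tilde d^{W}_\alpha(i,j)$, where $\tilde d^W_\alpha$ is the walk distance of $\tilde G$: with $\tilde A$ the weighted adjacency matrix of $\tilde G$, $\tilde\rho$ its spectral radius, $t=(\tilde\rho+\alpha^{-1})^{-1}$ and $(I-t\tilde A)^{-1}=(r_{ij})$, $\tilde d^W_\alpha(i,j)=\theta\bigl(\tfrac12(\ln r_{ii}+\ln r_{jj})-\ln r_{ij}\bigr)$.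
   Context: Loops and multiple edges are allowed. The weighted adjacency matrix $A=(a_{ij})$ has $a_{ij}$ equal to the sum of weights of the edges joining $i$ and $j$; $L=\operatorname{diag}(A\mathbf 1)-A$. A balance-graph of $G$ is a graph $\tilde G$ with $V(\tilde G)=V$, $E(G)\subseteq E(\tilde G)$, the edges of $E(G)$ keeping their weights, $E(\tilde G)\setminus E(G)$ consisting of loops (with positive weights), and such that the weighted adjacency matrix of $\tilde G$ has constant row sums. *)

theory Defs
  imports "HOL-Analysis.Analysis"
begin

text \<open>A weighted multigraph (loops and multiple edges allowed) on the vertex type 'n
  is given by a set of edges E, an endpoint map ends (a loop has one endpoint, an ordinary
  edge two) and a weight map w.\<close>

definition multigraph :: "'e set \<Rightarrow> ('e \<Rightarrow> 'n set) \<Rightarrow> ('e \<Rightarrow> real) \<Rightarrow> bool" where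
  "multigraph E ends w \<longleftrightarrow> finite E \<and>
     (\<forall>e\<in>E. ends e \<noteq> {} \<and> card (ends e) \<le> 2 \<and> w e > 0)"

definition wadj :: "'e set \<Rightarrow> ('e \<Rightarrow> 'n::finite set) \<Rightarrow> ('e \<Rightarrow> real) \<Rightarrow> real^'n^'n" where
  "wadj E ends w = (\<chi> i j. \<Sum>e\<in>{e\<in>E. ends e = {i, j}}. w e)"

definition mg_connected :: "'e set \<Rightarrow> ('e \<Rightarrow> 'n set) \<Rightarrow> bool" where
  "mg_connected E ends \<longleftrightarrow>
     (\<forall>i j. (\<lambda>x y. \<exists>e\<in>E. ends e = {x, y})\<^sup>*\<^sup>* i j)"

definition laplacian :: "real^'n^'n \<Rightarrow> real^'n::finite^'n" where
  "laplacian A = (\<chi> i j. (if i = j then (\<Sum>k\<in>UNIV. A $ i $ k) else 0) - A $ i $ j)"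

definition balance_graph ::
  "'e set \<Rightarrow> ('e \<Rightarrow> 'n::finite set) \<Rightarrow> ('e \<Rightarrow> real) \<Rightarrow>
   'e set \<Rightarrow> ('e \<Rightarrow> 'n set) \<Rightarrow> ('e \<Rightarrow> real) \<Rightarrow> bool" where
  "balance_graph E ends w E' ends' w' \<longleftrightarrow>
     finite E' \<and> E \<subseteq> E' \<and>
     (\<forall>e\<in>E. ends' e = ends e \<and> w' e = w e) \<and>
     (\<forall>e\<in>E' - E. card (ends' e) = 1 \<and> w' e > 0) \<and>
     (\<exists>c. \<forall>i. (\<Sum>j\<in>UNIV. wadj E' ends' w' $ i $ j) = c)"

definition cmatrix :: "real^'n^'m \<Rightarrow> complex^'n^'m" where
  "cmatrix A = (\<chi> i j. complex_of_real (A $ i $ j))"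

definition spectral_radius :: "real^'n::finite^'n \<Rightarrow> real" where
  "spectral_radius A = Sup {cmod c | c. \<exists>v::complex^'n. v \<noteq> 0 \<and> cmatrix A *v v = c *s v}"

definition theta :: "nat \<Rightarrow> real \<Rightarrow> real" where
  "theta n \<alpha> = (if \<alpha> = 1 then ln (exp 1 + 1)
                 else ln (exp 1 + \<alpha> powr (2 / real n)) * (\<alpha> - 1) / ln \<alpha>)"

definition log_dist :: "nat \<Rightarrow> real \<Rightarrow> real^'n^'n \<Rightarrow> 'n \<Rightarrow> 'n \<Rightarrow> real" where
  "log_dist n \<alpha> M i j = theta n \<alpha> * ((ln (M $ i $ i) + ln (M $ j $ j)) / 2 - ln (M $ i $ j))"

definition forest_dist :: "real \<Rightarrow> real^'n::finite^'n \<Rightarrow> 'n \<Rightarrow> 'n \<Rightarrow> real" where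
  "forest_dist \<alpha> A = log_dist CARD('n) \<alpha> (matrix_inv (mat 1 + \<alpha> *\<^sub>R laplacian A))"

definition walk_dist :: "real \<Rightarrow> real^'n::finite^'n \<Rightarrow> 'n \<Rightarrow> 'n \<Rightarrow> real" where
  "walk_dist \<alpha> A = (let t = 1 / (spectral_radius A + 1 / \<alpha>) in
     log_dist CARD('n) \<alpha> (matrix_inv (mat 1 - t *\<^sub>R A)))"

end

theory Submission
  imports Defs
begin

lemma Mrow:
  fixes A :: "real^'n::finite^'n"
  shows "(\<Sum>l\<in>UNIV. (mat 1 + \<alpha> *\<^sub>R laplacian A)$k$l * y l) = y k + \<alpha>*(\<Sum>l\<in>UNIV. A$k$l*(y k - y l))"
proof -
  have e: "\<And>l. (mat 1 + \<alpha> *\<^sub>R laplacian A)$k$l * y l = (if k = l then (1 + \<alpha>*(\<Sum>m\<in>UNIV. A$k$m)) * y k else 0) - \<alpha> * (A$k$l * y l)"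
    by (simp add: laplacian_def mat_def algebra_simps)
  have "(\<Sum>l\<in>UNIV. (mat 1 + \<alpha> *\<^sub>R laplacian A)$k$l * y l)
     = (1 + \<alpha>*(\<Sum>m\<in>UNIV. A$k$m)) * y k - \<alpha> * (\<Sum>l\<in>UNIV. A$k$l * y l)"
    unfolding e sum_subtractf by (simp add: sum_distrib_left)
  also have "\<dots> = y k + \<alpha>*(\<Sum>l\<in>UNIV. A$k$l*(y k - y l))"
    by (simp add: algebra_simps sum_subtractf sum_distrib_left sum_distrib_right)
  finally show ?thesis .
qed

lemma maxp:
  fixes A :: "'n::finite \<Rightarrow> 'n \<Rightarrow> real" and x :: "'n \<Rightarrow> real"
  assumes "\<alpha> > 0" "\<And>k l. A k l \<ge> 0" "\<And>k. x k + \<alpha> * (\<Sum>l\<in>UNIV. A k l * (x k - x l)) \<ge> 0"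
  shows "x k \<ge> 0"
proof -
  have "Min (range x) \<in> range x" by (rule Min_in) auto
  then obtain m where m: "x m = Min (range x)" by (metis imageE)
  have le: "\<And>l. x m \<le> x l" unfolding m by (rule Min_le) auto
  have "(\<Sum>l\<in>UNIV. A m l * (x m - x l)) \<le> 0"
    by (rule sum_nonpos) (simp add: assms(2) le mult_nonneg_nonpos)
  hence "\<alpha> * (\<Sum>l\<in>UNIV. A m l * (x m - x l)) \<le> 0" using assms(1) by (simp add: mult_nonneg_nonpos)
  with assms(3)[of m] have "x m \<ge> 0" by linarith
  with le[of k] show ?thesis by linarith
qed

lemma inv_unique:
  fixes A B :: "real^'n::finite^'n"
  assumes "A ** B = mat 1" "B ** A = mat 1"
  shows "matrix_inv A = B"
proof -
  let ?C = "matrix_inv A"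
  have "A ** ?C = mat 1 \<and> ?C ** A = mat 1"
    unfolding matrix_inv_def by (rule someI[of _ B]) (use assms in auto)
  hence "?C = ?C ** (A ** B)" using assms by (simp add: matrix_mul_rid)
  also have "\<dots> = (?C ** A) ** B" by (simp add: matrix_mul_assoc)
  also have "\<dots> = B" using \<open>A ** ?C = mat 1 \<and> ?C ** A = mat 1\<close> by (simp add: matrix_mul_lid)
  finally show ?thesis .
qed

lemma M_inv:
  fixes A :: "real^'n::finite^'n"
  assumes a: "\<alpha> > 0" and nn: "\<And>k l. A$k$l \<ge> 0"
  shows "invertible (mat 1 + \<alpha> *\<^sub>R laplacian A)"
proof -
  let ?M = "mat 1 + \<alpha> *\<^sub>R laplacian A"
  have "\<forall>x. ?M *v x = 0 \<longrightarrow> x = 0"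
  proof (intro allI impI)
    fix x assume h: "?M *v x = 0"
    have r: "\<And>k y. y k + \<alpha>*(\<Sum>l\<in>UNIV. A$k$l*(y k - y l)) = (?M *v (\<chi> i. y i))$k"
      using Mrow[of \<alpha> A _ _] by (simp add: matrix_vector_mult_def)
    have p: "\<And>k. x$k \<ge> 0"
      by (rule maxp[of \<alpha> "\<lambda>k l. A$k$l"]) (use a nn r[where y="\<lambda>i. x$i"] h in \<open>auto simp: vec_lambda_eta\<close>)
    have hm: "?M *v (-x) = 0" using h matrix_vector_mult_diff_distrib[of ?M 0 x] by simp
    have ee: "(\<chi> i. - x $ i) = -x" by (simp add: vec_eq_iff)
    have q: "\<And>k. -(x$k) \<ge> 0"
      by (rule maxp[of \<alpha> "\<lambda>k l. A$k$l"]) (use a nn r[where y="\<lambda>i. -x$i"] hm ee in \<open>auto simp: vec_lambda_eta\<close>)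
    show "x = 0" using p q by (simp add: vec_eq_iff) (meson antisym neg_0_le_iff_le)
  qed
  then obtain B where B: "B ** ?M = mat 1" using matrix_left_invertible_ker by blast
  hence "?M ** B = mat 1" using matrix_left_right_inverse by blast
  with B show ?thesis unfolding invertible_def by blast
qed

lemma inv_props:
  fixes M :: "real^'n::finite^'n"
  assumes "invertible M"
  shows "M ** matrix_inv M = mat 1" "matrix_inv M ** M = mat 1"
proof -
  obtain B where "M ** B = mat 1 \<and> B ** M = mat 1" using assms unfolding invertible_def by blast
  hence "M ** matrix_inv M = mat 1 \<and> matrix_inv M ** M = mat 1"
    unfolding matrix_inv_def by (rule someI)
  thus "M ** matrix_inv M = mat 1" "matrix_inv M ** M = mat 1" by auto
qed

lemma Q_pos:
  fixes A :: "real^'n::finite^'n"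
  assumes a: "\<alpha> > 0" and nn: "\<And>k l. A$k$l \<ge> 0"
    and conn: "\<And>k l. R\<^sup>*\<^sup>* k l" and adj: "\<And>k l. R k l \<Longrightarrow> k \<noteq> l \<Longrightarrow> A$k$l > 0"
  shows "matrix_inv (mat 1 + \<alpha> *\<^sub>R laplacian A) $ k $ j > 0"
proof -
  let ?M = "mat 1 + \<alpha> *\<^sub>R laplacian A"
  let ?Q = "matrix_inv ?M"
  define x where "x = (\<lambda>l. ?Q $ l $ j)"
  have MQ: "?M ** ?Q = mat 1" using inv_props(1)[OF M_inv[OF a nn]] .
  have eq: "x k + \<alpha> * (\<Sum>l\<in>UNIV. A$k$l * (x k - x l)) = (if k = j then 1 else 0)" for k
  proof -
    have "(?M ** ?Q) $ k $ j = (if k = j then 1 else 0)" using MQ by (simp add: mat_def)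
    thus ?thesis using Mrow[of \<alpha> A k x] by (simp add: matrix_matrix_mult_def x_def)
  qed
  have pos: "x k \<ge> 0" for k
    by (rule maxp[of \<alpha> "\<lambda>k l. A$k$l"]) (use a nn eq in auto)
  have zero: "k \<noteq> j \<and> (\<forall>l. A$k$l > 0 \<longrightarrow> x l = 0)" if z: "x k = 0" for k
  proof -
    have s: "(\<Sum>l\<in>UNIV. A$k$l * (x k - x l)) = - (\<Sum>l\<in>UNIV. A$k$l * x l)"
      using z by (simp add: sum_negf[symmetric])
    have snn: "(\<Sum>l\<in>UNIV. A$k$l * x l) \<ge> 0" by (rule sum_nonneg) (simp add: nn pos)
    have "- \<alpha> * (\<Sum>l\<in>UNIV. A$k$l * x l) = (if k = j then 1 else 0)" using eq[of k] z s by simp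
    moreover have "\<alpha> * (\<Sum>l\<in>UNIV. A$k$l * x l) \<ge> 0" using a snn by simp
    ultimately have kj: "k \<noteq> j" and s0: "(\<Sum>l\<in>UNIV. A$k$l * x l) = 0"
      using a by (auto split: if_splits)
    have "\<forall>l\<in>UNIV. A$k$l * x l = 0"
      using s0 sum_nonneg_eq_0_iff[of UNIV "\<lambda>l. A$k$l * x l"] nn pos by auto
    thus ?thesis using kj by (metis UNIV_I less_irrefl mult_eq_0_iff)
  qed
  show ?thesis
  proof (rule ccontr)
    assume "\<not> ?Q $ k $ j > 0"
    hence "x k = 0" using pos[of k] unfolding x_def by auto
    have "R\<^sup>*\<^sup>* k j" by (rule conn)
    hence "x j = 0"
    proof (induction rule: rtranclp_induct)
      case base show ?case by fact
    next
      case (step y z)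
      show ?case
      proof (cases "y = z")
        case True thus ?thesis using step by simp
      next
        case False thus ?thesis using zero[OF step.IH] adj[OF step.hyps(2)] by blast
      qed
    qed
    thus False using zero by blast
  qed
qed

lemma spec_rad:
  fixes B :: "real^'n::finite^'n"
  assumes nn: "\<And>k l. B$k$l \<ge> 0" and rs: "\<And>i. (\<Sum>j\<in>UNIV. B$i$j) = c"
  shows "spectral_radius B = c"
  unfolding spectral_radius_def
proof (rule cSup_eq_maximum)
  have c0: "c \<ge> 0" using rs[of undefined] by (metis nn sum_nonneg)
  have "cmatrix B *v 1 = complex_of_real c *s (1::complex^'n)"
    using rs by (simp add: vec_eq_iff cmatrix_def matrix_vector_mult_def flip: of_real_sum)
  moreover have "(1::complex^'n) \<noteq> 0" by (simp add: vec_eq_iff)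
  ultimately show "c \<in> {cmod c | c. \<exists>v::complex^'n. v \<noteq> 0 \<and> cmatrix B *v v = c *s v}" apply -
  proof -
    assume h: "cmatrix B *v 1 = complex_of_real c *s (1::complex^'n)" "(1::complex^'n) \<noteq> 0"
    have "cmod (complex_of_real c) = c" using c0 by simp
    hence "\<exists>cc. c = cmod cc \<and> (\<exists>v::complex^'n. v\<noteq>0 \<and> cmatrix B *v v = cc *s v)"
      using h by (intro exI[of _ "complex_of_real c"] conjI exI[of _ 1]) auto
    thus ?thesis by simp
  qed
next
  fix r assume "r \<in> {cmod c | c. \<exists>v::complex^'n. v \<noteq> 0 \<and> cmatrix B *v v = c *s v}"
  then obtain lam v where r: "r = cmod lam" and v: "v \<noteq> (0::complex^'n)" and ev: "cmatrix B *v v = lam *s v" by auto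
  have "Max (range (\<lambda>k. cmod (v$k))) \<in> range (\<lambda>k. cmod (v$k))" by (rule Max_in) auto
  then obtain m where m: "cmod (v$m) = Max (range (\<lambda>k. cmod (v$k)))" by (metis imageE)
  have le: "\<And>l. cmod (v$l) \<le> cmod (v$m)" unfolding m by (rule Max_ge) auto
  have vm: "cmod (v$m) > 0"
  proof (rule ccontr)
    assume "\<not> cmod (v$m) > 0"
    hence "\<And>l. v$l = 0" using le by (metis norm_le_zero_iff order.trans not_less)
    thus False using v by (simp add: vec_eq_iff)
  qed
  have "lam * v$m = (\<Sum>l\<in>UNIV. complex_of_real (B$m$l) * v$l)"
    using ev by (simp add: vec_eq_iff cmatrix_def matrix_vector_mult_def)
  hence "cmod lam * cmod (v$m) = cmod (\<Sum>l\<in>UNIV. complex_of_real (B$m$l) * v$l)"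
    by (metis norm_mult)
  also have "\<dots> \<le> (\<Sum>l\<in>UNIV. cmod (complex_of_real (B$m$l) * v$l))" by (rule norm_sum)
  also have "\<dots> = (\<Sum>l\<in>UNIV. B$m$l * cmod (v$l))" by (simp add: norm_mult nn)
  also have "\<dots> \<le> (\<Sum>l\<in>UNIV. B$m$l * cmod (v$m))"
    by (rule sum_mono) (simp add: le nn mult_left_mono)
  also have "\<dots> = c * cmod (v$m)" using rs[of m] by (simp add: sum_distrib_right[symmetric])
  finally have "cmod lam * cmod (v$m) \<le> c * cmod (v$m)" .
  thus "r \<le> c" using vm r by simp
qed

theorem corollary6:
  fixes E E' :: "'e set" and ends ends' :: "'e \<Rightarrow> 'n::finite set"
    and w w' :: "'e \<Rightarrow> real" and \<alpha> :: real and i j :: 'n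
  assumes "CARD('n) \<ge> 2"
    and "multigraph E ends w"
    and "mg_connected E ends"
    and "balance_graph E ends w E' ends' w'"
    and "\<alpha> > 0"
  shows "forest_dist \<alpha> (wadj E ends w) i j = walk_dist \<alpha> (wadj E' ends' w') i j"
proof -
  define A where "A = wadj E ends w"
  define B where "B = wadj E' ends' w'"
  have a: "\<alpha> > 0" by fact
  have finE: "finite E" and wpos: "\<And>e. e \<in> E \<Longrightarrow> w e > 0"
    using assms(2) unfolding multigraph_def by auto
  have finE': "finite E'" and sub: "E \<subseteq> E'" and same: "\<And>e. e \<in> E \<Longrightarrow> ends' e = ends e \<and> w' e = w e"
    and new: "\<And>e. e \<in> E' - E \<Longrightarrow> card (ends' e) = 1 \<and> w' e > 0"
    using assms(4) unfolding balance_graph_def by auto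
  obtain c where rs: "\<And>i. (\<Sum>j\<in>UNIV. B $ i $ j) = c"
    using assms(4) unfolding balance_graph_def B_def by auto
  have wpos': "w' e > 0" if "e \<in> E'" for e
    using that wpos same new by (cases "e \<in> E") auto
  have Aent: "A$k$l = (\<Sum>e\<in>{e\<in>E. ends e = {k, l}}. w e)" for k l
    unfolding A_def wadj_def by simp
  have Bent: "B$k$l = (\<Sum>e\<in>{e\<in>E'. ends' e = {k, l}}. w' e)" for k l
    unfolding B_def wadj_def by simp
  have nnA: "A$k$l \<ge> 0" for k l
    unfolding Aent by (rule sum_nonneg) (auto dest: wpos intro: less_imp_le)
  have nnB: "B$k$l \<ge> 0" for k l
    unfolding Bent by (rule sum_nonneg) (auto dest: wpos' intro: less_imp_le)
  have off: "B$k$l = A$k$l" if "k \<noteq> l" for k l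
  proof -
    have "{e\<in>E'. ends' e = {k, l}} = {e\<in>E. ends' e = {k, l}}"
    proof -
      have "card {k, l} = 2" using that by simp
      thus ?thesis using sub new by force
    qed
    thus ?thesis unfolding Aent Bent using same by (auto intro!: sum.cong)
  qed
  have Bform: "B$k$l = (if k = l then c else 0) - laplacian A $ k $ l" for k l
  proof (cases "k = l")
    case False thus ?thesis using off by (simp add: laplacian_def)
  next
    case True
    have "c = B$k$k + (\<Sum>m\<in>UNIV - {k}. B$k$m)" using rs[of k] sum.remove[of UNIV k "\<lambda>m. B$k$m"] by simp
    moreover have "(\<Sum>m\<in>UNIV - {k}. B$k$m) = (\<Sum>m\<in>UNIV - {k}. A$k$m)" by (rule sum.cong) (auto intro: off)
    moreover have "(\<Sum>m\<in>UNIV. A$k$m) = A$k$k + (\<Sum>m\<in>UNIV - {k}. A$k$m)" using sum.remove[of UNIV k "\<lambda>m. A$k$m"] by simp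
    ultimately show ?thesis using True by (simp add: laplacian_def)
  qed
  define R where "R = (\<lambda>x y. \<exists>e\<in>E. ends e = {x, y})"
  have conn: "R\<^sup>*\<^sup>* k l" for k l using assms(3) unfolding mg_connected_def R_def by blast
  have adj: "A$k$l > 0" if rkl: "R k l" "k \<noteq> l" for k l
  proof -
    obtain e where e: "e \<in> E" "ends e = {k, l}" using rkl unfolding R_def by blast
    have "w e \<le> A$k$l" unfolding Aent
      by (rule member_le_sum) (use e finE wpos in \<open>auto intro: less_imp_le\<close>)
    thus ?thesis using wpos[OF e(1)] by simp
  qed
  have sr: "spectral_radius B = c" by (rule spec_rad[OF nnB rs])
  have c0: "c \<ge> 0" using rs[of i] by (metis nnB sum_nonneg)
  define s where "s = 1 + \<alpha> * c"
  have s0: "s > 0" unfolding s_def using a c0 by (simp add: add_pos_nonneg)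
  define M where "M = mat 1 + \<alpha> *\<^sub>R laplacian A"
  define Q where "Q = matrix_inv M"
  have invM: "invertible M" unfolding M_def by (rule M_inv[OF a nnA])
  have t: "mat 1 - (1 / (spectral_radius B + 1 / \<alpha>)) *\<^sub>R B = (1/s) *\<^sub>R M"
  proof -
    have tt: "1 / (c + 1 / \<alpha>) = \<alpha> / s" using a s0 unfolding s_def by (simp add: field_simps)
    show ?thesis unfolding sr tt
      using s0 by (simp add: vec_eq_iff Bform M_def mat_def field_simps) (simp add: s_def algebra_simps)
  qed
  have inv2: "matrix_inv ((1/s) *\<^sub>R M) = s *\<^sub>R Q"
    by (rule inv_unique) (use s0 inv_props[OF invM] in \<open>simp_all add: Q_def matrix_scalar_ac scalar_matrix_assoc[symmetric]\<close>)
  have Qpos: "Q$k$l > 0" for k l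
    unfolding Q_def M_def by (rule Q_pos[OF a nnA conn adj])
  have lnQ: "ln ((s *\<^sub>R Q)$k$l) = ln s + ln (Q$k$l)" for k l
    using s0 Qpos[of k l] by (simp add: ln_mult)
  show ?thesis
    unfolding A_def[symmetric] B_def[symmetric] forest_dist_def walk_dist_def Let_def t inv2
    unfolding log_dist_def lnQ M_def[symmetric] Q_def[symmetric]
    by (simp add: algebra_simps)
qed

end
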